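(* Let $X$ be a convex metric space over a Boolean ring $B$, $0\in X$, and let $\{x_{1},\dots,x_{n}\}$ be a base of $(X,0)$. Then for every integer $k\ge1$ the ideal $I_k(X)$ is principal, $\alpha_{k}(X)=|x_{k}|$ for $k\le n$, and $\alpha_{k}(X)=0$ for $k>n$.
   Context: $B$ is a Boolean ring ($a\vee b=a+b+ab$, $a\le b\iff ab=a$; $a_1\oplus\cdots\oplus a_n$ denotes a sum of pairwise disjoint elements). A Boolean metric space over $B$: set $X$ with $d:X\times X\to B$, $d(x,y)=0\iff x=y$, symmetric, $d(x,z)\le d(x,y)\vee d(y,z)$. For $x_1,\dots,x_n\in X$, $a_i\in B$ with $a_1\oplus\cdots\oplus a_n=1$, $x$ is a convex combination of the $x_i$ with coefficients $a_i$ if $a_id(x,x_i)=0$ for all $i$; $X$ is convex if all such combinations exist. In $(X,0)$: $|x|=d(0,x)$; $x\perp y$ iff $d(x,y)=|x|\vee|y|$; a finite $R\subseteq X$ is orthogonal if $0\notin R$ and distinct elements are orthogonal; a referential is an orthogonal $R$ such that every element of $X$ is a convex combination of elements of $R\cup\{0\}$; a base is a referential $\{x_1,\dots,x_n\}$ with $|x_1|\ge\cdots\ge|x_n|$. For integer $k>0$, $I_k(X)$ is the ideal of $B$ generated by $\{\prod_{0\le i<j\le k}d(u_i,u_j): u_0,\dots,u_k\in X\}$, and when principal, $\alpha_k(X)$ is its generator. *)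

theory Defs
  imports Main
begin

text \<open>A Boolean ring is a ring with unit in which every element is idempotent;
  such a ring is automatically commutative, so we work in a comm_ring_1
  with the idempotency assumption.\<close>

definition boolean_ring :: "'b::comm_ring_1 itself \<Rightarrow> bool" where
  "boolean_ring _ \<longleftrightarrow> (\<forall>a::'b. a * a = a)"

definition bjoin :: "'b::comm_ring_1 \<Rightarrow> 'b \<Rightarrow> 'b" where
  "bjoin a b = a + b + a * b"

definition ble :: "'b::comm_ring_1 \<Rightarrow> 'b \<Rightarrow> bool" where
  "ble a b \<longleftrightarrow> a * b = a"

definition disjoint_partition :: "nat \<Rightarrow> (nat \<Rightarrow> 'b::comm_ring_1) \<Rightarrow> bool" where
  "disjoint_partition n a \<longleftrightarrow>
     (\<forall>i<n. \<forall>j<n. i \<noteq> j \<longrightarrow> a i * a j = 0) \<and> (\<Sum>i<n. a i) = 1"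

definition boolean_metric :: "'a set \<Rightarrow> ('a \<Rightarrow> 'a \<Rightarrow> 'b::comm_ring_1) \<Rightarrow> bool" where
  "boolean_metric X d \<longleftrightarrow>
     (\<forall>x\<in>X. \<forall>y\<in>X. d x y = 0 \<longleftrightarrow> x = y) \<and>
     (\<forall>x\<in>X. \<forall>y\<in>X. d x y = d y x) \<and>
     (\<forall>x\<in>X. \<forall>y\<in>X. \<forall>z\<in>X. ble (d x z) (bjoin (d x y) (d y z)))"

definition convex_comb ::
  "('a \<Rightarrow> 'a \<Rightarrow> 'b::comm_ring_1) \<Rightarrow> 'a \<Rightarrow> nat \<Rightarrow> (nat \<Rightarrow> 'a) \<Rightarrow> (nat \<Rightarrow> 'b) \<Rightarrow> bool" where
  "convex_comb d x n xs a \<longleftrightarrow> (\<forall>i<n. a i * d x (xs i) = 0)"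

definition convex_bms :: "'a set \<Rightarrow> ('a \<Rightarrow> 'a \<Rightarrow> 'b::comm_ring_1) \<Rightarrow> bool" where
  "convex_bms X d \<longleftrightarrow>
     (\<forall>n xs a. (\<forall>i<n. xs i \<in> X) \<and> disjoint_partition n a \<longrightarrow>
        (\<exists>x\<in>X. convex_comb d x n xs a))"

definition bnorm :: "('a \<Rightarrow> 'a \<Rightarrow> 'b::comm_ring_1) \<Rightarrow> 'a \<Rightarrow> 'a \<Rightarrow> 'b" where
  "bnorm d z x = d z x"

definition borth :: "('a \<Rightarrow> 'a \<Rightarrow> 'b::comm_ring_1) \<Rightarrow> 'a \<Rightarrow> 'a \<Rightarrow> 'a \<Rightarrow> bool" where
  "borth d z x y \<longleftrightarrow> d x y = bjoin (bnorm d z x) (bnorm d z y)"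

definition orthogonal_set :: "'a set \<Rightarrow> ('a \<Rightarrow> 'a \<Rightarrow> 'b::comm_ring_1) \<Rightarrow> 'a \<Rightarrow> 'a set \<Rightarrow> bool" where
  "orthogonal_set X d z R \<longleftrightarrow>
     finite R \<and> R \<subseteq> X \<and> z \<notin> R \<and>
     (\<forall>x\<in>R. \<forall>y\<in>R. x \<noteq> y \<longrightarrow> borth d z x y)"

definition referential :: "'a set \<Rightarrow> ('a \<Rightarrow> 'a \<Rightarrow> 'b::comm_ring_1) \<Rightarrow> 'a \<Rightarrow> 'a set \<Rightarrow> bool" where
  "referential X d z R \<longleftrightarrow>
     orthogonal_set X d z R \<and>
     (\<forall>x\<in>X. \<exists>m ys a. (\<forall>i<m. ys i \<in> R \<union> {z}) \<and> disjoint_partition m a \<and>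
                        convex_comb d x m ys a)"

definition is_base :: "'a set \<Rightarrow> ('a \<Rightarrow> 'a \<Rightarrow> 'b::comm_ring_1) \<Rightarrow> 'a \<Rightarrow> nat \<Rightarrow> (nat \<Rightarrow> 'a) \<Rightarrow> bool" where
  "is_base X d z n x \<longleftrightarrow>
     inj_on x {1..n} \<and> referential X d z (x ` {1..n}) \<and>
     (\<forall>i j. 1 \<le> i \<and> i \<le> j \<and> j \<le> n \<longrightarrow> ble (bnorm d z (x j)) (bnorm d z (x i)))"

definition is_ideal :: "'b::comm_ring_1 set \<Rightarrow> bool" where
  "is_ideal I \<longleftrightarrow> 0 \<in> I \<and> (\<forall>a\<in>I. \<forall>b\<in>I. a + b \<in> I) \<and> (\<forall>a\<in>I. - a \<in> I) \<and>
                   (\<forall>r. \<forall>a\<in>I. r * a \<in> I)"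

definition gen_ideal :: "'b::comm_ring_1 set \<Rightarrow> 'b set" where
  "gen_ideal S = \<Inter>{I. is_ideal I \<and> S \<subseteq> I}"

definition I_k :: "'a set \<Rightarrow> ('a \<Rightarrow> 'a \<Rightarrow> 'b::comm_ring_1) \<Rightarrow> nat \<Rightarrow> 'b set" where
  "I_k X d k = gen_ideal
     {(\<Prod>(i,j)\<in>{(i,j). i < j \<and> j \<le> k}. d (u i) (u j)) | u. \<forall>i\<le>k. u i \<in> X}"

definition principal_ideal :: "'b::comm_ring_1 set \<Rightarrow> bool" where
  "principal_ideal I \<longleftrightarrow> (\<exists>a. I = gen_ideal {a})"

end

theory Submission
  imports Defs "HOL-Library.FuncSet"
begin

lemma br_two:
  fixes a :: "'b::comm_ring_1"
  assumes B: "\<forall>a::'b. a * a = a"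
  shows "a + a = 0"
proof -
  have "(a + a) * (a + a) = a + a" using B by blast
  hence "a*a + a*a + a*a + a*a = a + a" by (simp add: algebra_simps)
  hence "a + a + a + a = a + a" using B by simp
  thus ?thesis by (simp add: algebra_simps)
qed

lemma tri:
  fixes d :: "'a \<Rightarrow> 'a \<Rightarrow> 'b::comm_ring_1"
  assumes B: "\<forall>a::'b. a * a = a" and M: "boolean_metric X d"
    and X: "x \<in> X" "y \<in> X" "w \<in> X" and c: "c * d x y = 0"
  shows "c * d x w = c * d y w"
proof -
  have h1: "d x w * (d x y + d y w + d x y * d y w) = d x w"
    using M X unfolding boolean_metric_def ble_def bjoin_def by blast
  have h2: "d y w * (d y x + d x w + d y x * d x w) = d y w"
    using M X unfolding boolean_metric_def ble_def bjoin_def by blast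
  have s: "d y x = d x y" using M X unfolding boolean_metric_def by blast
  have "c * d x w = c * d x w * (d x y + d y w + d x y * d y w)" using h1 by (simp add: mult.assoc)
  also have "\<dots> = (c * d x y) * d x w * (1 + d y w) + c * d x w * d y w" by (simp add: algebra_simps)
  also have "\<dots> = c * d x w * d y w" using c by simp
  finally have e1: "c * d x w = c * d x w * d y w" .
  have "c * d y w = c * d y w * (d y x + d x w + d y x * d x w)" using h2 by (simp add: mult.assoc)
  also have "\<dots> = (c * d x y) * d y w * (1 + d x w) + c * d y w * d x w" using s by (simp add: algebra_simps)
  also have "\<dots> = c * d y w * d x w" using c by simp
  finally have e2: "c * d y w = c * d y w * d x w" .
  show ?thesis using e1 e2 by (simp add: algebra_simps)
qed

lemma gen_ideal_ideal: "is_ideal (gen_ideal S)"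
  unfolding gen_ideal_def is_ideal_def by auto

lemma gen_ideal_sub: "S \<subseteq> gen_ideal S"
  unfolding gen_ideal_def by auto

lemma gen_ideal_min: "is_ideal I \<Longrightarrow> S \<subseteq> I \<Longrightarrow> gen_ideal S \<subseteq> I"
  unfolding gen_ideal_def by auto

lemma gen_ideal_princ:
  assumes "a \<in> S" and "\<forall>s\<in>S. \<exists>r. s = r * a"
  shows "gen_ideal S = gen_ideal {a}"
proof
  have "a \<in> gen_ideal {a}" using gen_ideal_sub by blast
  have "S \<subseteq> gen_ideal {a}"
  proof
    fix s assume "s \<in> S"
    then obtain r where "s = r * a" using assms(2) by blast
    moreover have "\<forall>r. \<forall>b\<in>gen_ideal {a}. r * b \<in> gen_ideal {a}"
      using gen_ideal_ideal[of "{a}"] unfolding is_ideal_def by blast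
    ultimately show "s \<in> gen_ideal {a}" using \<open>a \<in> gen_ideal {a}\<close> by blast
  qed
  thus "gen_ideal S \<subseteq> gen_ideal {a}" by (rule gen_ideal_min[OF gen_ideal_ideal])
  show "gen_ideal {a} \<subseteq> gen_ideal S"
    using assms(1) gen_ideal_sub[of S] by (intro gen_ideal_min[OF gen_ideal_ideal]) auto
qed

lemma prod_fix:
  fixes a :: "'b::comm_ring_1"
  assumes "finite A" "\<forall>p\<in>A. F p * a = a"
  shows "a * prod F A = a"
  using assms
proof (induction A rule: finite_induct)
  case empty then show ?case by simp
next
  case (insert p A)
  have "a * prod F (insert p A) = (F p * a) * prod F A" using insert(1,2) by (simp add: algebra_simps)
  also have "\<dots> = a" using insert(3,4) by (simp add: mult.commute)
  finally show ?case .
qed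


lemma bjoin_fix:
  fixes p q a :: "'b::comm_ring_1"
  assumes B: "\<forall>a::'b. a * a = a" and q: "q * a = a"
  shows "bjoin p q * a = a"
proof -
  have "bjoin p q * a = p * a + q * a + p * (q * a)" unfolding bjoin_def by (simp add: algebra_simps)
  also have "\<dots> = (p * a + p * a) + a" using q by (simp add: algebra_simps)
  also have "\<dots> = a" using br_two[OF B] by simp
  finally show ?thesis .
qed

theorem mainTheorem6:
  fixes X :: "'a set" and d :: "'a \<Rightarrow> 'a \<Rightarrow> 'b::comm_ring_1"
    and z :: 'a and n :: nat and x :: "nat \<Rightarrow> 'a"
  assumes "boolean_ring TYPE('b)"
    and "boolean_metric X d"
    and "convex_bms X d"
    and "z \<in> X"
    and "is_base X d z n x"
  shows "\<forall>k\<ge>1. principal_ideal (I_k X d k) \<and>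
           (k \<le> n \<longrightarrow> I_k X d k = gen_ideal {bnorm d z (x k)}) \<and>
           (n < k \<longrightarrow> I_k X d k = gen_ideal {0})"
proof (intro allI impI)
  fix k :: nat assume k1: "1 \<le> k"
  have B: "\<forall>a::'b. a * a = a" using assms(1) unfolding boolean_ring_def by blast
  have M: "boolean_metric X d" by fact
  have d0: "\<And>v. v \<in> X \<Longrightarrow> d v v = 0" using M unfolding boolean_metric_def by blast
  have dsym: "\<And>v w. v \<in> X \<Longrightarrow> w \<in> X \<Longrightarrow> d v w = d w v" using M unfolding boolean_metric_def by blast
  have inj: "inj_on x {1..n}" and ref: "referential X d z (x ` {1..n})"
   and mono: "\<And>i j. 1 \<le> i \<Longrightarrow> i \<le> j \<Longrightarrow> j \<le> n \<Longrightarrow> d z (x j) * d z (x i) = d z (x j)"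
    using assms(5) unfolding is_base_def ble_def bnorm_def by auto
  have orth: "orthogonal_set X d z (x ` {1..n})" using ref unfolding referential_def by blast
  have xX: "\<And>i. i \<in> {1..n} \<Longrightarrow> x i \<in> X" using orth unfolding orthogonal_set_def by blast
  have ort: "\<And>i j. i \<in> {1..n} \<Longrightarrow> j \<in> {1..n} \<Longrightarrow> i \<noteq> j \<Longrightarrow> d (x i) (x j) = bjoin (d z (x i)) (d z (x j))"
  proof -
    fix i j assume ij: "i \<in> {1..n}" "j \<in> {1..n}" "i \<noteq> j"
    hence "x i \<noteq> x j" using inj unfolding inj_on_def by blast
    thus "d (x i) (x j) = bjoin (d z (x i)) (d z (x j))"
      using orth ij unfolding orthogonal_set_def borth_def bnorm_def by blast
  qed
  define S where "S = x ` {1..n} \<union> {z}"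
  have finS: "finite S" unfolding S_def by simp
  have SX: "S \<subseteq> X" using xX assms(4) unfolding S_def by auto
  have wex: "\<forall>u\<in>X. \<exists>w. sum w S = 1 \<and> (\<forall>s\<in>S. w s * d u s = 0)"
  proof
    fix u assume "u \<in> X"
    then obtain m ys a where ys: "\<forall>i<m. ys i \<in> S" and dp: "disjoint_partition m a"
        and cc: "convex_comb d u m ys a"
      using ref unfolding referential_def S_def by blast
    define w where "w s = (\<Sum>l\<in>{l. l \<in> {..<m} \<and> ys l = s}. a l)" for s
    have "sum w S = (\<Sum>l<m. a l)" unfolding w_def by (rule sum.group) (use ys finS in auto)
    also have "\<dots> = 1" using dp unfolding disjoint_partition_def by blast
    finally have "sum w S = 1" .
    moreover have "\<forall>s\<in>S. w s * d u s = 0"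
    proof
      fix s assume "s \<in> S"
      have "w s * d u s = (\<Sum>l\<in>{l. l \<in> {..<m} \<and> ys l = s}. a l * d u (ys l))"
        unfolding w_def sum_distrib_right by (rule sum.cong) auto
      also have "\<dots> = 0" using cc unfolding convex_comb_def by (intro sum.neutral) auto
      finally show "w s * d u s = 0" .
    qed
    ultimately show "\<exists>w. sum w S = 1 \<and> (\<forall>s\<in>S. w s * d u s = 0)" by blast
  qed
  obtain W where W: "\<forall>u\<in>X. sum (W u) S = 1 \<and> (\<forall>s\<in>S. W u s * d u s = 0)"
    using bchoice[OF wex] by blast
  have W1: "\<And>u. u \<in> X \<Longrightarrow> sum (W u) S = 1" using W by blast
  have W2: "\<And>u s. u \<in> X \<Longrightarrow> s \<in> S \<Longrightarrow> W u s * d u s = 0" using W by blast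
  define e where "e = (if k \<le> n then 1 - d z (x k) else (1::'b))"
  define G where "G = x ` {1..<min (n+1) k}"
  define \<phi> where "\<phi> s = (if s \<in> G then s else z)" for s
  have GS: "G \<subseteq> S" unfolding G_def S_def by auto
  have phiS: "\<And>s. s \<in> S \<Longrightarrow> \<phi> s \<in> G \<union> {z}" unfolding \<phi>_def by auto
  have phiX: "\<And>s. s \<in> S \<Longrightarrow> \<phi> s \<in> X" using phiS GS SX assms(4) by blast
  have cardG: "card (G \<union> {z}) \<le> k"
  proof -
    have "card (G \<union> {z}) \<le> card G + 1" using card_Un_le[of G "{z}"] by simp
    moreover have "card G \<le> min (n+1) k - 1" unfolding G_def
      using card_image_le[of "{1..<min (n+1) k}" x] by simp
    ultimately show ?thesis using k1 by linarith
  qed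
  have ephi: "\<And>s. s \<in> S \<Longrightarrow> e * d s (\<phi> s) = 0"
  proof -
    fix s assume s: "s \<in> S"
    show "e * d s (\<phi> s) = 0"
    proof (cases "s \<in> G")
      case True then show ?thesis using d0 s SX unfolding \<phi>_def by auto
    next
      case False
      then have ps: "\<phi> s = z" unfolding \<phi>_def by simp
      show ?thesis
      proof (cases "s = z")
        case True then show ?thesis using ps d0 assms(4) by simp
      next
        case False
        then obtain m where m: "m \<in> {1..n}" "s = x m" using s unfolding S_def by auto
        with \<open>s \<notin> G\<close> have "\<not> m < min (n+1) k" unfolding G_def by auto
        hence km: "k \<le> m" "k \<le> n" using m by auto
        have ds: "d s z = d z (x m)" using dsym m xX assms(4) by auto
        have mk: "d z (x m) * d z (x k) = d z (x m)" using mono[of k m] km k1 m by auto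
        have "(1 - d z (x k)) * d z (x m) = d z (x m) - d z (x m) * d z (x k)"
          by (simp add: algebra_simps)
        also have "\<dots> = 0" using mk by simp
        finally show ?thesis unfolding e_def ps ds using km by simp
      qed
    qed
  qed
  define P where "P = {(i,j). i < j \<and> j \<le> (k::nat)}"
  have finP: "finite P"
  proof -
    have "P \<subseteq> {..k} \<times> {..k}" unfolding P_def by auto
    thus ?thesis by (rule finite_subset) auto
  qed
  have upper: "e * (\<Prod>(i,j)\<in>P. d (u i) (u j)) = 0" if uX: "\<forall>i\<le>k. u i \<in> X" for u
  proof -
    define g where "g = (\<Prod>(i,j)\<in>P. d (u i) (u j))"
    have one: "(\<Prod>i\<in>{..k}. \<Sum>s\<in>S. W (u i) s) = 1" using W1 uX by (intro prod.neutral) auto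
    have "e * g = e * g * (\<Prod>i\<in>{..k}. \<Sum>s\<in>S. W (u i) s)" using one by simp
    also have "\<dots> = (\<Sum>f\<in>PiE {..k} (\<lambda>_. S). e * g * (\<Prod>i\<in>{..k}. W (u i) (f i)))"
      by (simp add: prod_sum_PiE finS sum_distrib_left)
    also have "\<dots> = 0"
    proof (rule sum.neutral, rule ballI)
      fix f assume f: "f \<in> PiE {..k} (\<lambda>_. S)"
      define Wf where "Wf i = W (u i) (f i)" for i
      define c where "c = e * (\<Prod>i\<in>{..k}. Wf i)"
      have fS: "\<And>i. i \<le> k \<Longrightarrow> f i \<in> S" using f by auto
      have cW: "c * Wf i = c" if i: "i \<le> k" for i
      proof -
        have "(\<Prod>i\<in>{..k}. Wf i) = Wf i * (\<Prod>i\<in>{..k}-{i}. Wf i)"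
          using i by (intro prod.remove) auto
        hence cc: "c = e * Wf i * (\<Prod>i\<in>{..k}-{i}. Wf i)" unfolding c_def by (simp add: mult.assoc)
        have "c * Wf i = e * (Wf i * Wf i) * (\<Prod>i\<in>{..k}-{i}. Wf i)"
          unfolding cc by (simp add: algebra_simps)
        also have "\<dots> = c" unfolding cc using B by simp
        finally show ?thesis .
      qed
      have cd: "c * d (u i) (f i) = 0" if i: "i \<le> k" for i
      proof -
        have "c * d (u i) (f i) = c * (Wf i * d (u i) (f i))" using cW[OF i] by (metis mult.assoc)
        also have "\<dots> = 0" using W2 uX fS i unfolding Wf_def by simp
        finally show ?thesis .
      qed
      have cphi: "c * d (f i) (\<phi> (f i)) = 0" if i: "i \<le> k" for i
      proof -
        have "c * d (f i) (\<phi> (f i)) = (\<Prod>i\<in>{..k}. Wf i) * (e * d (f i) (\<phi> (f i)))"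
          unfolding c_def by (simp add: algebra_simps)
        also have "\<dots> = 0" using ephi fS i by simp
        finally show ?thesis .
      qed
      have "\<not> inj_on (\<phi> \<circ> f) {..k}"
      proof
        assume "inj_on (\<phi> \<circ> f) {..k}"
        hence "card ((\<phi> \<circ> f) ` {..k}) = k + 1" using card_image[of "\<phi> \<circ> f" "{..k}"] by simp
        moreover have "(\<phi> \<circ> f) ` {..k} \<subseteq> G \<union> {z}" using phiS fS by auto
        hence "card ((\<phi> \<circ> f) ` {..k}) \<le> card (G \<union> {z})" by (intro card_mono) (auto simp: G_def)
        ultimately show False using cardG by simp
      qed
      then obtain a b where ab: "a \<le> k" "b \<le> k" "a \<noteq> b" "\<phi> (f a) = \<phi> (f b)"
        unfolding inj_on_def by auto
      define i where "i = min a b"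
      define j where "j = max a b"
      have ij: "i \<le> k" "j \<le> k" "i < j" "\<phi> (f i) = \<phi> (f j)"
        using ab unfolding i_def j_def min_def max_def by auto
      have ui: "u i \<in> X" "u j \<in> X" using uX ij by auto
      have fiX: "f i \<in> X" "f j \<in> X" using fS ij SX by auto
      have phX: "\<phi> (f i) \<in> X" "\<phi> (f j) \<in> X" using phiX fS ij by auto
      have cj: "c * d (\<phi> (f j)) (f j) = 0" using cphi[OF ij(2)] dsym[OF fiX(2) phX(2)] by simp
      have "c * d (u i) (u j) = c * d (f i) (u j)" by (rule tri[OF B M ui(1) fiX(1) ui(2) cd[OF ij(1)]])
      also have "\<dots> = c * d (\<phi> (f i)) (u j)" by (rule tri[OF B M fiX(1) phX(1) ui(2) cphi[OF ij(1)]])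
      also have "\<dots> = c * d (\<phi> (f j)) (u j)" using ij by simp
      also have "\<dots> = c * d (f j) (u j)" by (rule tri[OF B M phX(2) fiX(2) ui(2) cj])
      also have "\<dots> = c * d (u j) (f j)" using dsym[OF fiX(2) ui(2)] by simp
      also have "\<dots> = 0" using cd[OF ij(2)] .
      finally have cij: "c * d (u i) (u j) = 0" .
      have "(i,j) \<in> P" using ij unfolding P_def by auto
      hence "g = d (u i) (u j) * (\<Prod>(i,j)\<in>P-{(i,j)}. d (u i) (u j))"
        unfolding g_def by (subst prod.remove[OF finP]) auto
      hence "e * g * (\<Prod>i\<in>{..k}. Wf i) = (c * d (u i) (u j)) * (\<Prod>(i,j)\<in>P-{(i,j)}. d (u i) (u j))"
        unfolding c_def by (simp add: algebra_simps)
      thus "e * g * (\<Prod>i\<in>{..k}. W (u i) (f i)) = 0" using cij unfolding Wf_def by simp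
    qed
    finally show ?thesis unfolding g_def .
  qed
  define Gen where "Gen = {(\<Prod>(i,j)\<in>P. d (u i) (u j)) | u. \<forall>i\<le>k. u i \<in> X}"
  have IG: "I_k X d k = gen_ideal Gen" unfolding I_k_def Gen_def P_def ..
  define u0 where "u0 i = (if i = 0 then z else x i)" for i
  show "principal_ideal (I_k X d k) \<and>
           (k \<le> n \<longrightarrow> I_k X d k = gen_ideal {bnorm d z (x k)}) \<and>
           (n < k \<longrightarrow> I_k X d k = gen_ideal {0})"
  proof (cases "k \<le> n")
    case kn: True
    let ?a = "d z (x k)"
    have fac: "\<forall>p\<in>P - {(0,k)}. (case p of (i,j) \<Rightarrow> d (u0 i) (u0 j)) * ?a = ?a"
    proof
      fix p assume "p \<in> P - {(0,k)}"
      then obtain i j where p: "p = (i,j)" "i < j" "j \<le> k" unfolding P_def by auto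
      have jk: "d z (x k) * d z (x j) = d z (x k)" using mono[of j k] p kn by auto
      show "(case p of (i,j) \<Rightarrow> d (u0 i) (u0 j)) * ?a = ?a"
      proof (cases "i = 0")
        case True
        then show ?thesis using p jk by (simp add: u0_def mult.commute)
      next
        case False
        have "d (x i) (x j) = bjoin (d z (x i)) (d z (x j))" using ort[of i j] p False kn by auto
        moreover have "d z (x j) * ?a = ?a" using jk by (simp add: mult.commute)
        ultimately show ?thesis using p False bjoin_fix[OF B] by (simp add: u0_def)
      qed
    qed
    have "(0,k) \<in> P" using k1 unfolding P_def by auto
    hence "(\<Prod>(i,j)\<in>P. d (u0 i) (u0 j)) = d (u0 0) (u0 k) * (\<Prod>(i,j)\<in>P-{(0,k)}. d (u0 i) (u0 j))"
      by (subst prod.remove[OF finP]) auto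
    also have "\<dots> = ?a * (\<Prod>(i,j)\<in>P-{(0,k)}. d (u0 i) (u0 j))" using k1 by (simp add: u0_def)
    also have "\<dots> = ?a" by (rule prod_fix) (use finP fac in auto)
    finally have low: "(\<Prod>(i,j)\<in>P. d (u0 i) (u0 j)) = ?a" .
    have u0X: "\<forall>i\<le>k. u0 i \<in> X" using xX assms(4) kn unfolding u0_def by auto
    have aG: "?a \<in> Gen" unfolding Gen_def
      by (rule CollectI, rule exI[of _ u0]) (use low u0X in simp)
    have mult: "\<forall>s\<in>Gen. \<exists>r. s = r * ?a"
    proof
      fix s assume "s \<in> Gen"
      then obtain u where u: "\<forall>i\<le>k. u i \<in> X" "s = (\<Prod>(i,j)\<in>P. d (u i) (u j))"
        unfolding Gen_def by blast
      have "(1 - ?a) * s = 0" using upper[OF u(1)] u(2) kn unfolding e_def by simp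
      hence "s = s * ?a" by (simp add: algebra_simps)
      thus "\<exists>r. s = r * ?a" by blast
    qed
    have eq: "I_k X d k = gen_ideal {bnorm d z (x k)}"
      unfolding IG bnorm_def by (rule gen_ideal_princ[OF aG mult])
    show ?thesis using eq kn unfolding principal_ideal_def by auto
  next
    case False
    have "Gen = {0}"
    proof
      show "Gen \<subseteq> {0}"
      proof
        fix s assume "s \<in> Gen"
        then obtain u where u: "\<forall>i\<le>k. u i \<in> X" "s = (\<Prod>(i,j)\<in>P. d (u i) (u j))"
          unfolding Gen_def by blast
        show "s \<in> {0}" using upper[OF u(1)] u(2) False unfolding e_def by simp
      qed
      have "(\<Prod>(i,j)\<in>P. d ((\<lambda>_. z) i) ((\<lambda>_. z) j)) \<in> Gen" unfolding Gen_def
        by (rule CollectI, rule exI[of _ "\<lambda>_. z"]) (use assms(4) in simp)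
      thus "{0} \<subseteq> Gen" using \<open>Gen \<subseteq> {0}\<close> by auto
    qed
    hence eq: "I_k X d k = gen_ideal {0}" using IG by simp
    show ?thesis using eq False unfolding principal_ideal_def by auto
  qed
qed

end
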